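(* For infinitely many $n\in\mathbb{N}$ there exist matroids $M=(E,\mathcal{I})$ and $M'=(E,\mathcal{I}')$ over the same ground set $E$ with $|E|=n$, and a weight function $w:E\to\{0,1\}$, together with a vertex $x^*$ of the polytope $\{x: x\in P_B(M)\cap P_B(M'),\ w^{\mathsf T}x=1\}$, such that there is a unique common basis $B$ of $M$ and $M'$ with $w(B)=1$, and this $B$ satisfies $\|x^*-\chi(B)\|_1=\tfrac34 n$.
   Context: $P_B(M)$ denotes the base polytope of $M$ (convex hull of characteristic vectors of bases of $M$) in $\mathbb{R}^E$; $\chi(B)$ is the characteristic vector of $B$; $w(S)=\sum_{e\in S}w(e)$; a common basis is a set that is a basis of both matroids. *)

theory Defs
  imports Main "HOL-Library.Indicator_Function"
begin

definition matroid :: "'a set \<Rightarrow> 'a set set \<Rightarrow> bool" where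
  "matroid E \<I> \<longleftrightarrow> finite E \<and> (\<forall>X\<in>\<I>. X \<subseteq> E) \<and> {} \<in> \<I>
     \<and> (\<forall>X Y. X \<in> \<I> \<and> Y \<subseteq> X \<longrightarrow> Y \<in> \<I>)
     \<and> (\<forall>X Y. X \<in> \<I> \<and> Y \<in> \<I> \<and> card X < card Y \<longrightarrow> (\<exists>e\<in>Y - X. insert e X \<in> \<I>))"

definition basis :: "'a set set \<Rightarrow> 'a set \<Rightarrow> bool" where
  "basis \<I> B \<longleftrightarrow> B \<in> \<I> \<and> (\<forall>X\<in>\<I>. B \<subseteq> X \<longrightarrow> X = B)"

text \<open>Characteristic vector of a set, as a point of R^E (coordinates outside E are 0).\<close>
definition chi :: "'a set \<Rightarrow> 'a \<Rightarrow> real" where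
  "chi B = indicator B"

definition conv_hull :: "('a \<Rightarrow> real) set \<Rightarrow> ('a \<Rightarrow> real) set" where
  "conv_hull A = {x. \<exists>S u. finite S \<and> S \<subseteq> A \<and> (\<forall>y\<in>S. u y \<ge> 0) \<and> sum u S = 1
                        \<and> x = (\<lambda>e. \<Sum>y\<in>S. u y * y e)}"

definition base_polytope :: "'a set set \<Rightarrow> ('a \<Rightarrow> real) set" where
  "base_polytope \<I> = conv_hull {chi B | B. basis \<I> B}"

definition vertex_of :: "('a \<Rightarrow> real) \<Rightarrow> ('a \<Rightarrow> real) set \<Rightarrow> bool" where
  "vertex_of x Q \<longleftrightarrow> x \<in> Q \<and>
     \<not> (\<exists>a\<in>Q. \<exists>b\<in>Q. a \<noteq> b \<and> (\<exists>t::real. 0 < t \<and> t < 1 \<and> x = (\<lambda>e. (1 - t) * a e + t * b e)))"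

end

theory Submission
  imports Defs
begin


definition pm :: "'a set \<Rightarrow> ('a \<Rightarrow> nat) \<Rightarrow> 'a set set" where
  "pm E p = {X. X \<subseteq> E \<and> inj_on p X}"

lemma pm_matroid:
  assumes "finite E" shows "matroid E (pm E p)"
  unfolding matroid_def
proof (intro conjI allI impI ballI)
  show "finite E" by fact
  show "X \<subseteq> E" if "X \<in> pm E p" for X using that by (simp add: pm_def)
  show "{} \<in> pm E p" by (simp add: pm_def)
  show "Y \<in> pm E p" if "X \<in> pm E p \<and> Y \<subseteq> X" for X Y
    using that by (auto simp: pm_def intro: inj_on_subset)
  show "\<exists>e\<in>Y - X. insert e X \<in> pm E p" if h: "X \<in> pm E p \<and> Y \<in> pm E p \<and> card X < card Y" for X Y
  proof -
    have X: "X \<subseteq> E" "inj_on p X" and Y: "Y \<subseteq> E" "inj_on p Y" and c: "card X < card Y"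
      using h by (auto simp: pm_def)
    have fX: "finite X" "finite Y" using X Y assms finite_subset by auto
    have "card (p ` X) < card (p ` Y)" using c X Y by (simp add: card_image)
    then have "\<not> p ` Y \<subseteq> p ` X" using fX card_mono[of "p ` X" "p ` Y"]
      by (meson card_mono finite_imageI leD)
    then obtain y where y: "y \<in> Y" "p y \<notin> p ` X" by auto
    then have "y \<notin> X" by auto
    moreover have "insert y X \<in> pm E p" using X Y y by (auto simp: pm_def)
    ultimately show ?thesis using y by auto
  qed
qed

lemma pm_basis:
  "basis (pm E p) X \<longleftrightarrow> X \<subseteq> E \<and> inj_on p X \<and> p ` X = p ` E"
proof
  assume b: "basis (pm E p) X"
  then have X: "X \<subseteq> E" "inj_on p X" by (auto simp: basis_def pm_def)
  have "p ` E \<subseteq> p ` X"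
  proof
    fix z assume "z \<in> p ` E"
    then obtain e where e: "e \<in> E" "z = p e" by auto
    show "z \<in> p ` X"
    proof (rule ccontr)
      assume "z \<notin> p ` X"
      then have "insert e X \<in> pm E p" "e \<notin> X" using X e by (auto simp: pm_def)
      then show False using b by (auto simp: basis_def)
    qed
  qed
  then show "X \<subseteq> E \<and> inj_on p X \<and> p ` X = p ` E" using X by auto
next
  assume h: "X \<subseteq> E \<and> inj_on p X \<and> p ` X = p ` E"
  show "basis (pm E p) X" unfolding basis_def
  proof (intro conjI ballI impI)
    show "X \<in> pm E p" using h by (simp add: pm_def)
    fix Y assume Y: "Y \<in> pm E p" "X \<subseteq> Y"
    show "Y = X"
    proof
      show "Y \<subseteq> X"
      proof
        fix y assume y: "y \<in> Y"
        then have "p y \<in> p ` X" using Y h by (auto simp: pm_def)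
        then obtain x where "x \<in> X" "p x = p y" by auto
        then show "y \<in> X" using Y y by (auto simp: pm_def inj_on_def)
      qed
    qed (use Y in auto)
  qed
qed

lemma pm_pair:
  assumes "basis (pm E p) X" "a \<in> E" "b \<in> E" "a \<noteq> b" "p a = p b"
    "\<And>y. y \<in> E \<Longrightarrow> p y = p a \<Longrightarrow> y = a \<or> y = b"
  shows "a \<in> X \<longleftrightarrow> b \<notin> X"
proof -
  have X: "X \<subseteq> E" "inj_on p X" "p ` X = p ` E" using assms(1) by (auto simp: pm_basis)
  have "\<not> (a \<in> X \<and> b \<in> X)" using X(2) assms(4,5) by (auto simp: inj_on_def)
  moreover have "p a \<in> p ` X" using X(3) assms(2) by auto
  then obtain x where "x \<in> X" "p x = p a" by auto
  then have "a \<in> X \<or> b \<in> X" using assms(6) X(1) by blast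
  ultimately show ?thesis by blast
qed

lemma conv_pair:
  assumes "x \<in> conv_hull A" "\<And>y. y \<in> A \<Longrightarrow> y a + y b = 1"
  shows "x a + x b = 1"
proof -
  obtain S u where S: "finite S" "S \<subseteq> A" "\<forall>y\<in>S. u y \<ge> 0" "sum u S = 1"
    "x = (\<lambda>e. \<Sum>y\<in>S. u y * y e)" using assms(1) unfolding conv_hull_def by blast
  have "x a + x b = (\<Sum>y\<in>S. u y * (y a + y b))"
    by (simp add: S(5) sum.distrib distrib_left)
  also have "\<dots> = (\<Sum>y\<in>S. u y)" using S(2) assms(2) by (intro sum.cong) auto
  finally show ?thesis using S(4) by simp
qed

lemma conv_nonneg:
  assumes "x \<in> conv_hull A" "\<And>y. y \<in> A \<Longrightarrow> y a \<ge> 0"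
  shows "x a \<ge> 0"
proof -
  obtain S u where S: "finite S" "S \<subseteq> A" "\<forall>y\<in>S. u y \<ge> 0" "sum u S = 1"
    "x = (\<lambda>e. \<Sum>y\<in>S. u y * y e)" using assms(1) unfolding conv_hull_def by blast
  show ?thesis unfolding S(5) using S(2,3) assms(2) by (intro sum_nonneg) auto
qed

lemma conv_zero:
  assumes "x \<in> conv_hull A" "\<And>y. y \<in> A \<Longrightarrow> y a = 0"
  shows "x a = 0"
proof -
  obtain S u where S: "finite S" "S \<subseteq> A" "\<forall>y\<in>S. u y \<ge> 0" "sum u S = 1"
    "x = (\<lambda>e. \<Sum>y\<in>S. u y * y e)" using assms(1) unfolding conv_hull_def by blast
  show ?thesis unfolding S(5) using S(2) assms(2) by (intro sum.neutral) auto
qed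

lemma conv_two:
  assumes "y1 \<in> A" "y2 \<in> A" "y1 \<noteq> y2" "0 \<le> c" "c \<le> 1"
  shows "(\<lambda>e. (1 - c) * y1 e + c * y2 e) \<in> conv_hull A"
  unfolding conv_hull_def
proof (intro CollectI exI conjI)
  let ?u = "\<lambda>y. if y = y1 then 1 - c else c"
  show "finite {y1, y2}" by simp
  show "{y1, y2} \<subseteq> A" using assms by simp
  show "\<forall>y\<in>{y1, y2}. 0 \<le> ?u y" using assms by auto
  show "sum ?u {y1, y2} = 1" using assms by simp
  show "(\<lambda>e. (1 - c) * y1 e + c * y2 e) = (\<lambda>e. \<Sum>y\<in>{y1, y2}. ?u y * y e)"
    using assms by auto
qed

lemma bp_nonneg: "x \<in> base_polytope I \<Longrightarrow> x a \<ge> 0"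
  unfolding base_polytope_def by (erule conv_nonneg) (auto simp: chi_def)

lemma bp_zero: "x \<in> base_polytope (pm E p) \<Longrightarrow> a \<notin> E \<Longrightarrow> x a = 0"
  unfolding base_polytope_def by (erule conv_zero) (force simp: chi_def pm_basis indicator_def)

lemma bp_pair:
  assumes "x \<in> base_polytope (pm E p)" "a \<in> E" "b \<in> E" "a \<noteq> b" "p a = p b"
    "\<And>y. y \<in> E \<Longrightarrow> p y = p a \<Longrightarrow> y = a \<or> y = b"
  shows "x a + x b = 1"
  using assms(1) unfolding base_polytope_def
proof (rule conv_pair)
  fix y assume "y \<in> {chi B |B. basis (pm E p) B}"
  then obtain X where X: "y = chi X" "basis (pm E p) X" by auto
  from pm_pair[OF X(2) assms(2-6)] show "y a + y b = 1" by (auto simp: X(1) chi_def)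
qed




definition pq :: "(nat \<Rightarrow> nat) \<Rightarrow> nat \<Rightarrow> nat" where "pq q y = min y (q y)"

lemma pq_same:
  assumes "\<And>e. e \<in> E \<Longrightarrow> q e \<in> E \<and> q e \<noteq> e \<and> q (q e) = e" "e \<in> E"
  shows "pq q (q e) = pq q e"
  using assms by (auto simp: pq_def min_def)

lemma pq_uniq:
  assumes "\<And>e. e \<in> E \<Longrightarrow> q e \<in> E \<and> q e \<noteq> e \<and> q (q e) = e" "e \<in> E" "y \<in> E" "pq q y = pq q e"
  shows "y = e \<or> y = q e"
proof -
  have qy: "q (q y) = y" "q (q e) = e" using assms(1)[OF assms(2)] assms(1)[OF assms(3)] by auto
  have "(y = e \<or> y = q e) \<or> (q y = e \<or> q y = q e)"
    using assms(4) unfolding pq_def min_def by (auto split: if_splits)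
  then show ?thesis using qy by metis
qed

definition q1 :: "nat \<Rightarrow> nat" where "q1 e = (if even e then e+1 else e-1)"
definition q2 :: "nat \<Rightarrow> nat \<Rightarrow> nat" where
  "q2 m e = (if e = 0 then 6*m+3 else if e = 6*m+3 then 0 else if e = 6*m+4 then 8*m+7
     else if e = 8*m+7 then 6*m+4 else if odd e then e+1 else e-1)"

lemma q1_props: assumes "e < 8*m+8"
  shows "q1 e < 8*m+8 \<and> (q1 e < 6*m+4) = (e < 6*m+4) \<and> even (q1 e) = odd e \<and> q1 e \<noteq> e \<and> q1 (q1 e) = e"
proof (cases "even e")
  case True
  then obtain j where j: "e = 2*j" by (auto elim: evenE)
  have "2*j+1 < 8*m+8" "(2*j+1 < 6*m+4) = (2*j < 6*m+4)" using j assms by presburger+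
  then show ?thesis using j by (simp add: q1_def)
next
  case False
  then obtain j where j: "e = 2*j+1" by (auto elim: oddE)
  have "(2*j < 6*m+4) = (2*j+1 < 6*m+4)" using j assms by presburger+
  then show ?thesis using j assms by (simp add: q1_def)
qed

lemma q2_inv: assumes "e < 8*m+8" shows "q2 m (q2 m e) = e"
proof (cases "even e")
  case True
  then obtain j where j: "e = 2*j" by (auto elim: evenE)
  show ?thesis
  proof (cases "j = 0 \<or> j = 3*m+2")
    case True then show ?thesis using j by (auto simp: q2_def)
  next
    case False
    have "2*j - 1 \<noteq> 6*m+4" "2*j \<noteq> 6*m+3" "2*j \<noteq> 8*m+7" "2*j-1 \<noteq> 8*m+7" "2*j - 1 \<noteq> 0" "2*j-1 \<noteq> 6*m+3"
      using False j assms by presburger+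
    moreover have "odd (2*j - 1)" using False by presburger
    ultimately show ?thesis using j False by (simp add: q2_def)
  qed
next
  case False
  then obtain j where j: "e = 2*j+1" by (auto elim: oddE)
  show ?thesis
  proof (cases "j = 3*m+1 \<or> j = 4*m+3")
    case True then show ?thesis using j by (auto simp: q2_def)
  next
    case False
    have "2*j+1 \<noteq> 6*m+4" "2*j+2 \<noteq> 6*m+3" "2*j+2 \<noteq> 8*m+7" "2*j+2 \<noteq> 6*m+4" "2*j+1 \<noteq> 8*m+7" "2*j+1 \<noteq> 6*m+3"
      using False j assms by presburger+
    then show ?thesis using j False by (simp add: q2_def)
  qed
qed

lemma q2_props: assumes "e < 8*m+8"
  shows "q2 m e < 8*m+8 \<and> (q2 m e < 6*m+4) = (e < 6*m+4) \<and> even (q2 m e) = odd e \<and> q2 m e \<noteq> e"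
proof (cases "even e")
  case True
  then obtain j where j: "e = 2*j" by (auto elim: evenE)
  show ?thesis
  proof (cases "j = 0 \<or> j = 3*m+2")
    case True then show ?thesis using j by (auto simp: q2_def)
  next
    case False
    have "2*j \<noteq> 6*m+3" "2*j \<noteq> 8*m+7" "odd (2*j - 1)" "2*j-1 < 8*m+8" "(2*j-1 < 6*m+4) = (2*j < 6*m+4)"
      using False j assms by presburger+
    then show ?thesis using j False by (simp add: q2_def)
  qed
next
  case False
  then obtain j where j: "e = 2*j+1" by (auto elim: oddE)
  show ?thesis
  proof (cases "j = 3*m+1 \<or> j = 4*m+3")
    case True then show ?thesis using j by (auto simp: q2_def)
  next
    case False
    have "2*j+1 \<noteq> 6*m+4" "2*j+1 \<noteq> 8*m+7" "2*j+1 \<noteq> 6*m+3" "2*j+2 < 8*m+8" "(2*j+2 < 6*m+4) = (2*j+1 < 6*m+4)"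
      using False j assms by presburger+
    then show ?thesis using j False by (simp add: q2_def)
  qed
qed


lemma q1_inv: "e \<in> {..<8*m+8} \<Longrightarrow> q1 e \<in> {..<8*m+8} \<and> q1 e \<noteq> e \<and> q1 (q1 e) = e"
  using q1_props[of e m] by auto

lemma q2_inv': "e \<in> {..<8*m+8} \<Longrightarrow> q2 m e \<in> {..<8*m+8} \<and> q2 m e \<noteq> e \<and> q2 m (q2 m e) = e"
  using q2_props[of e m] q2_inv[of e m] by auto




definition sel :: "nat \<Rightarrow> bool \<Rightarrow> bool \<Rightarrow> nat set" where
  "sel m s1 s2 = {e. e < 8*m+8 \<and> (if e < 6*m+4 then even e = s1 else even e = s2)}"

lemma pm_basis_partner:
  assumes "X \<subseteq> E" "\<And>e. e \<in> E \<Longrightarrow> q e \<in> E \<and> q e \<noteq> e \<and> p (q e) = p e"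
    "\<And>e y. e \<in> E \<Longrightarrow> y \<in> E \<Longrightarrow> p y = p e \<Longrightarrow> y = e \<or> y = q e"
    "\<And>e. e \<in> E \<Longrightarrow> e \<in> X \<longleftrightarrow> q e \<notin> X"
  shows "basis (pm E p) X"
  unfolding pm_basis
proof (intro conjI)
  show "inj_on p X"
  proof (rule inj_onI)
    fix x y assume h: "x \<in> X" "y \<in> X" "p x = p y"
    have xE: "x \<in> E" "y \<in> E" using h assms(1) by auto
    have "y = x \<or> y = q x" using assms(3)[OF xE(1) xE(2)] h(3) by simp
    moreover have "q x \<notin> X" using assms(4)[OF xE(1)] h(1) by simp
    ultimately show "x = y" using h(2) by auto
  qed
  show "p ` X = p ` E"
  proof
    show "p ` E \<subseteq> p ` X"
    proof
      fix z assume "z \<in> p ` E"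
      then obtain e where e: "e \<in> E" "z = p e" by auto
      show "z \<in> p ` X"
      proof (cases "e \<in> X")
        case True then show ?thesis using e by auto
      next
        case False then have qX: "q e \<in> X" using assms(4)[OF e(1)] by simp
        have "z = p (q e)" using e assms(2)[OF e(1)] by simp
        then show ?thesis using qX by simp
      qed
    qed
  qed (use assms(1) in auto)
qed (rule assms(1))

lemma sel_q1: assumes "e < 8*m+8" shows "(e \<in> sel m s1 s2) \<longleftrightarrow> (q1 e \<notin> sel m s1 s2)"
  using q1_props[OF assms] assms unfolding sel_def by auto

lemma sel_q2: assumes "e < 8*m+8" shows "(e \<in> sel m s1 s2) \<longleftrightarrow> (q2 m e \<notin> sel m s1 s2)"
  using q2_props[OF assms] assms unfolding sel_def by auto

lemma basis_q:
  assumes "\<And>e. e \<in> {..<8*m+8} \<Longrightarrow> q e \<in> {..<8*m+8} \<and> q e \<noteq> e \<and> q (q e) = e"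
    "\<And>e. e < 8*m+8 \<Longrightarrow> (e \<in> sel m s1 s2) \<longleftrightarrow> (q e \<notin> sel m s1 s2)"
  shows "basis (pm {..<8*m+8} (pq q)) (sel m s1 s2)"
proof (rule pm_basis_partner[where q=q])
  show "sel m s1 s2 \<subseteq> {..<8 * m + 8}" by (auto simp: sel_def)
  fix e assume e: "e \<in> {..<8*m+8}"
  show "q e \<in> {..<8 * m + 8} \<and> q e \<noteq> e \<and> pq q (q e) = pq q e"
    using assms(1)[OF e] pq_same[OF assms(1) e] by auto
  show "e \<in> sel m s1 s2 \<longleftrightarrow> q e \<notin> sel m s1 s2" by (rule assms(2)) (use e in auto)
  fix y assume "y \<in> {..<8*m+8}" "pq q y = pq q e"
  then show "y = e \<or> y = q e" using pq_uniq[OF assms(1) e] by blast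
qed

lemma sel_basis1: "basis (pm {..<8*m+8} (pq q1)) (sel m s1 s2)"
  by (rule basis_q[OF q1_inv sel_q1])

lemma sel_basis2: "basis (pm {..<8*m+8} (pq (q2 m))) (sel m s1 s2)"
  by (rule basis_q[OF q2_inv' sel_q2])

lemma consec:
  assumes "e + 1 < 6*m+4 \<or> (6*m+4 \<le> e \<and> e + 1 < 8*m+8)"
  shows "(even e \<and> q1 e = e + 1) \<or> (odd e \<and> q2 m e = e + 1)"
  using assms unfolding q1_def q2_def by (cases "even e") (auto simp: odd_pos)

lemma common_pair:
  assumes "basis (pm {..<8*m+8} (pq q1)) X" "basis (pm {..<8*m+8} (pq (q2 m))) X"
    "e + 1 < 6*m+4 \<or> (6*m+4 \<le> e \<and> e + 1 < 8*m+8)"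
  shows "e \<in> X \<longleftrightarrow> e + 1 \<notin> X"
proof -
  have e: "e < 8*m+8" "e+1 < 8*m+8" using assms(3) by auto
  from consec[OF assms(3)] show ?thesis
  proof
    assume h: "even e \<and> q1 e = e + 1"
    have inv: "\<And>x. x \<in> {..<8*m+8} \<Longrightarrow> q1 x \<in> {..<8*m+8} \<and> q1 x \<noteq> x \<and> q1 (q1 x) = x"
      by (rule q1_inv)
    have s: "pq q1 e = pq q1 (e+1)" using pq_same[OF inv, of e] h e by auto
    have u: "\<And>y. y \<in> {..<8*m+8} \<Longrightarrow> pq q1 y = pq q1 e \<Longrightarrow> y = e \<or> y = e+1"
      using pq_uniq[OF inv, of e] h e by auto
    show ?thesis using pm_pair[OF assms(1), of e "e+1"] s u e by auto
  next
    assume h: "odd e \<and> q2 m e = e + 1"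
    have inv: "\<And>x. x \<in> {..<8*m+8} \<Longrightarrow> (q2 m) x \<in> {..<8*m+8} \<and> (q2 m) x \<noteq> x \<and> (q2 m) ((q2 m) x) = x"
      by (rule q2_inv')
    have s: "pq (q2 m) e = pq (q2 m) (e+1)" using pq_same[OF inv, of e] h e by auto
    have u: "\<And>y. y \<in> {..<8*m+8} \<Longrightarrow> pq (q2 m) y = pq (q2 m) e \<Longrightarrow> y = e \<or> y = e+1"
      using pq_uniq[OF inv, of e] h e by auto
    show ?thesis using pm_pair[OF assms(2), of e "e+1"] s u e by auto
  qed
qed

lemma poly_pair:
  assumes "a \<in> base_polytope (pm {..<8*m+8} (pq q1))" "a \<in> base_polytope (pm {..<8*m+8} (pq (q2 m)))"
    "e + 1 < 6*m+4 \<or> (6*m+4 \<le> e \<and> e + 1 < 8*m+8)"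
  shows "a e + a (e + 1) = 1"
proof -
  have e: "e < 8*m+8" "e+1 < 8*m+8" using assms(3) by auto
  from consec[OF assms(3)] show ?thesis
  proof
    assume h: "even e \<and> q1 e = e + 1"
    have inv: "\<And>x. x \<in> {..<8*m+8} \<Longrightarrow> q1 x \<in> {..<8*m+8} \<and> q1 x \<noteq> x \<and> q1 (q1 x) = x"
      by (rule q1_inv)
    have s: "pq q1 e = pq q1 (e+1)" using pq_same[OF inv, of e] h e by auto
    have u: "\<And>y. y \<in> {..<8*m+8} \<Longrightarrow> pq q1 y = pq q1 e \<Longrightarrow> y = e \<or> y = e+1"
      using pq_uniq[OF inv, of e] h e by auto
    show ?thesis using bp_pair[OF assms(1), of e "e+1"] s u e by auto
  next
    assume h: "odd e \<and> q2 m e = e + 1"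
    have inv: "\<And>x. x \<in> {..<8*m+8} \<Longrightarrow> (q2 m) x \<in> {..<8*m+8} \<and> (q2 m) x \<noteq> x \<and> (q2 m) ((q2 m) x) = x"
      by (rule q2_inv')
    have s: "pq (q2 m) e = pq (q2 m) (e+1)" using pq_same[OF inv, of e] h e by auto
    have u: "\<And>y. y \<in> {..<8*m+8} \<Longrightarrow> pq (q2 m) y = pq (q2 m) e \<Longrightarrow> y = e \<or> y = e+1"
      using pq_uniq[OF inv, of e] h e by auto
    show ?thesis using bp_pair[OF assms(2), of e "e+1"] s u e by auto
  qed
qed

lemma common_char:
  assumes "basis (pm {..<8*m+8} (pq q1)) X" "basis (pm {..<8*m+8} (pq (q2 m))) X"
  shows "X = sel m (0 \<in> X) (6*m+4 \<in> X)"
proof -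
  have XE: "X \<subseteq> {..<8*m+8}" using assms(1) by (simp add: pm_basis)
  have c1: "e < 6*m+4 \<Longrightarrow> (e \<in> X \<longleftrightarrow> (even e = (0 \<in> X)))" for e
  proof (induction e)
    case 0 then show ?case by simp
  next
    case (Suc e)
    then have "e \<in> X \<longleftrightarrow> e + 1 \<notin> X" using common_pair[OF assms, of e] by auto
    then show ?case using Suc by auto
  qed
  have c2: "6*m+4+d < 8*m+8 \<Longrightarrow> (6*m+4+d \<in> X \<longleftrightarrow> (even d = (6*m+4 \<in> X)))" for d
  proof (induction d)
    case 0 then show ?case by simp
  next
    case (Suc d)
    then have "6*m+4+d \<in> X \<longleftrightarrow> 6*m+4+d + 1 \<notin> X" using common_pair[OF assms, of "6*m+4+d"] by auto
    then show ?case using Suc by auto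
  qed
  show ?thesis
  proof (rule set_eqI)
    fix e
    show "e \<in> X \<longleftrightarrow> e \<in> sel m (0 \<in> X) (6*m+4 \<in> X)"
    proof (cases "e < 6*m+4")
      case True then show ?thesis using c1[OF True] XE by (auto simp: sel_def)
    next
      case False
      then obtain d where d: "e = 6*m+4+d" by (metis le_add_diff_inverse not_less)
      have "even d = even e" using d by simp
      then show ?thesis using c2[of d] d XE False by (auto simp: sel_def)
    qed
  qed
qed




definition wt :: "nat \<Rightarrow> nat \<Rightarrow> real" where
  "wt m e = (if e = 1 \<or> (odd e \<and> 6*m+4 \<le> e) then 1 else 0)"
definition O2 :: "nat \<Rightarrow> nat set" where "O2 m = {e. e < 8*m+8 \<and> odd e \<and> 6*m+4 \<le> e}"
definition cc :: "nat \<Rightarrow> real" where "cc m = 1 / (real m + 2)"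
definition xst :: "nat \<Rightarrow> nat \<Rightarrow> real" where
  "xst m = (\<lambda>e. (1 - cc m) * chi (sel m True True) e + cc m * chi (sel m True False) e)"

lemma card_O2: "card (O2 m) = m + 2"
proof -
  have "O2 m = (\<lambda>i. 6*m+5+2*i) ` {..<m+2}"
  proof (rule set_eqI)
    fix e show "e \<in> O2 m \<longleftrightarrow> e \<in> (\<lambda>i. 6*m+5+2*i) ` {..<m+2}"
    proof
      assume "e \<in> O2 m"
      then have h: "e < 8*m+8" "odd e" "6*m+4 \<le> e" by (auto simp: O2_def)
      then obtain j where j: "e = 2*j+1" by (metis oddE)
      have "e = 6*m+5+2*(j - 3*m - 2)" "j - 3*m - 2 < m + 2" using h j by auto
      then show "e \<in> (\<lambda>i. 6*m+5+2*i) ` {..<m+2}" by blast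
    qed (auto simp: O2_def)
  qed
  moreover have "inj_on (\<lambda>i. 6*m+5+2*i) {..<m+2}" by (auto simp: inj_on_def)
  ultimately show ?thesis by (simp add: card_image)
qed

lemma wsum: "(\<Sum>e\<in>{..<8*m+8}. wt m e * g e) = g 1 + (\<Sum>e\<in>O2 m. g e)"
proof -
  have "(\<Sum>e\<in>{..<8*m+8}. wt m e * g e) = (\<Sum>e\<in>{..<8*m+8}. if e \<in> insert 1 (O2 m) then g e else 0)"
    by (intro sum.cong) (auto simp: wt_def O2_def)
  also have "\<dots> = sum g ({..<8*m+8} \<inter> insert 1 (O2 m))" by (rule sum.inter_restrict[symmetric]) simp
  also have "{..<8*m+8} \<inter> insert 1 (O2 m) = insert 1 (O2 m)" by (auto simp: O2_def)
  also have "sum g (insert 1 (O2 m)) = g 1 + sum g (O2 m)"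
    by (rule sum.insert) (auto simp: O2_def)
  finally show ?thesis .
qed

lemma xst_val: "xst m e = (if e < 6*m+4 then (if even e then 1 else 0)
   else if e < 8*m+8 then (if even e then 1 - cc m else cc m) else 0)"
  by (auto simp: xst_def chi_def sel_def indicator_def)

lemma cc_pos: "0 < cc m" "cc m < 1" "(real m + 2) * cc m = 1"
  by (auto simp: cc_def)




lemma pinned:
  assumes a1: "a \<in> base_polytope (pm {..<8*m+8} (pq q1))" and a2: "a \<in> base_polytope (pm {..<8*m+8} (pq (q2 m)))"
    and aw: "(\<Sum>e\<in>{..<8*m+8}. wt m e * a e) = 1"
    and b1: "b \<in> base_polytope (pm {..<8*m+8} (pq q1))"
    and t: "0 < t" "t < 1" and x: "xst m = (\<lambda>e. (1 - t) * a e + t * b e)"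
  shows "a = xst m"
proof -
  have x': "xst m e = (1 - t) * a e + t * b e" for e using x by metis
  have z: "a e = 0" if "xst m e = 0" for e
  proof -
    have "a e \<ge> 0" "b e \<ge> 0" using bp_nonneg[OF a1] bp_nonneg[OF b1] by auto
    then have "(1-t) * a e \<ge> 0" "t * b e \<ge> 0" using t by auto
    then have "(1-t) * a e = 0" using that x'[of e] by linarith
    then show ?thesis using t by simp
  qed
  have out: "a e = 0" if "\<not> e < 8*m+8" for e using bp_zero[OF a1] that by auto
  have c1o: "a e = 0" if "e < 6*m+4" "odd e" for e using z[of e] that by (simp add: xst_val)
  have c1e: "a e = 1" if "e < 6*m+4" "even e" for e
  proof -
    have lt: "e + 1 < 6*m+4" "odd (e+1)" using that by presburger+
    have "a e + a (e+1) = 1" using poly_pair[OF a1 a2, of e] lt by blast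
    moreover have "a (e+1) = 0" using c1o[of "e+1"] lt by blast
    ultimately show ?thesis by simp
  qed
  have c2: "6*m+4+d < 8*m+8 \<Longrightarrow> a (6*m+4+d) = (if even d then a (6*m+4) else 1 - a (6*m+4))" for d
  proof (induction d)
    case 0 then show ?case by simp
  next
    case (Suc d)
    have "a (6*m+4+d) + a (6*m+4+d+1) = 1" using poly_pair[OF a1 a2, of "6*m+4+d"] Suc.prems by auto
    then show ?case using Suc by auto
  qed
  have o2: "a e = 1 - a (6*m+4)" if "e \<in> O2 m" for e
  proof -
    have "6*m+4 \<le> e" using that by (simp add: O2_def)
    then obtain d where d: "e = 6*m+4+d" using le_Suc_ex by blast
    have "odd d" using d that by (auto simp: O2_def)
    then show ?thesis using c2[of d] d that by (auto simp: O2_def)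
  qed
  have "1 = a 1 + (\<Sum>e\<in>O2 m. a e)" using aw wsum[of m a] by simp
  also have "a 1 = 0" using c1o[of 1] by simp
  also have "(\<Sum>e\<in>O2 m. a e) = (\<Sum>e\<in>O2 m. 1 - a (6*m+4))" using o2 by (rule sum.cong[OF refl])
  also have "\<dots> = (real m + 2) * (1 - a (6*m+4))" by (simp add: card_O2)
  finally have s: "1 - a (6*m+4) = cc m" by (simp add: cc_def field_simps)
  show "a = xst m"
  proof
    fix e
    show "a e = xst m e"
    proof (cases "e < 6*m+4")
      case True then show ?thesis using c1o[of e] c1e[of e] by (auto simp: xst_val)
    next
      case False
      show ?thesis
      proof (cases "e < 8*m+8")
        case True
        obtain d where d: "e = 6*m+4+d" using False by (metis le_add_diff_inverse not_less)
        have "even d = even e" using d by simp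
        then show ?thesis using c2[of d] d True False s by (auto simp: xst_val)
      next
        case F: False then show ?thesis using out[of e] False by (simp add: xst_val)
      qed
    qed
  qed
qed

lemma main_m:
  "\<exists>(E::nat set) \<I> \<I>' (w::nat \<Rightarrow> real) (xs::nat \<Rightarrow> real).
     card E = 8*m+8 \<and> matroid E \<I> \<and> matroid E \<I>' \<and> (\<forall>e\<in>E. w e = 0 \<or> w e = 1) \<and>
     vertex_of xs {x. x \<in> base_polytope \<I> \<inter> base_polytope \<I>' \<and> (\<Sum>e\<in>E. w e * x e) = 1} \<and>
     (\<exists>B. basis \<I> B \<and> basis \<I>' B \<and> sum w B = 1 \<and>
          (\<forall>B'. basis \<I> B' \<and> basis \<I>' B' \<and> sum w B' = 1 \<longrightarrow> B' = B) \<and>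
          (\<Sum>e\<in>E. \<bar>xs e - chi B e\<bar>) = 3 / 4 * real (8*m+8))"
proof -
  let ?E = "{..<8*m+8}"
  let ?I = "pm ?E (pq q1)"
  let ?I' = "pm ?E (pq (q2 m))"
  let ?Q = "{x. x \<in> base_polytope ?I \<inter> base_polytope ?I' \<and> (\<Sum>e\<in>?E. wt m e * x e) = 1}"
  let ?B = "sel m False True"
  have neq: "chi (sel m True True) \<noteq> chi (sel m True False)"
  proof
    assume "chi (sel m True True) = chi (sel m True False)"
    then have "chi (sel m True True) (6*m+4) = chi (sel m True False) (6*m+4)" by simp
    then show False by (simp add: chi_def sel_def indicator_def)
  qed
  have inbp: "xst m \<in> base_polytope (pm ?E p)"
    if "basis (pm ?E p) (sel m True True)" "basis (pm ?E p) (sel m True False)" for p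
    unfolding base_polytope_def xst_def
    by (rule conv_two) (use that neq cc_pos[of m] in auto)
  have xw: "(\<Sum>e\<in>?E. wt m e * xst m e) = 1"
  proof -
    have "(\<Sum>e\<in>?E. wt m e * xst m e) = xst m 1 + (\<Sum>e\<in>O2 m. xst m e)" by (rule wsum)
    also have "xst m 1 = 0" by (simp add: xst_val)
    also have "(\<Sum>e\<in>O2 m. xst m e) = (\<Sum>e\<in>O2 m. cc m)"
      by (rule sum.cong) (auto simp: O2_def xst_val)
    also have "\<dots> = 1" using cc_pos(3)[of m] by (simp add: card_O2 add.commute)
    finally show ?thesis by simp
  qed
  have xQ: "xst m \<in> ?Q" using inbp[OF sel_basis1 sel_basis1] inbp[OF sel_basis2 sel_basis2] xw by auto
  have vert: "vertex_of (xst m) ?Q"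
    unfolding vertex_of_def
  proof (intro conjI notI)
    show "xst m \<in> ?Q" by (rule xQ)
    assume "\<exists>a\<in>?Q. \<exists>b\<in>?Q. a \<noteq> b \<and> (\<exists>t. 0 < t \<and> t < 1 \<and> xst m = (\<lambda>e. (1 - t) * a e + t * b e))"
    then obtain a b t where ab: "a \<in> ?Q" "b \<in> ?Q" "a \<noteq> b" "0 < t" "t < 1"
      "xst m = (\<lambda>e. (1 - t) * a e + t * b e)" by blast
    have "a = xst m" using pinned[of a m b t] ab by auto
    moreover have "b = xst m"
    proof (rule pinned[of b m a "1 - t"])
      show "xst m = (\<lambda>e. (1 - (1 - t)) * b e + (1 - t) * a e)" using ab(6) by (auto simp: algebra_simps)
    qed (use ab in auto)
    ultimately show False using ab(3) by simp
  qed
  have wB: "sum (wt m) ?B = 1"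
  proof -
    have "sum (wt m) ?B = (\<Sum>e\<in>?B. if e = 1 then 1 else 0)"
      by (rule sum.cong) (auto simp: wt_def sel_def)
    also have "\<dots> = 1" by (simp add: sel_def)
    finally show ?thesis .
  qed
  have uniq: "B' = ?B" if h: "basis ?I B'" "basis ?I' B'" "sum (wt m) B' = 1" for B'
  proof -
    have eq: "B' = sel m (0 \<in> B') (6*m+4 \<in> B')" by (rule common_char[OF h(1,2)])
    have fin: "finite B'" using h(1) by (auto simp: pm_basis intro: finite_subset)
    have s2: "6*m+4 \<in> B'"
    proof (rule ccontr)
      assume n: "6*m+4 \<notin> B'"
      have sub: "{6*m+5, 6*m+7} \<subseteq> B'" using n by (subst eq, auto simp: sel_def)
      have "sum (wt m) {6*m+5, 6*m+7} \<le> sum (wt m) B'"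
        by (rule sum_mono2[OF fin sub]) (auto simp: wt_def)
      moreover have "sum (wt m) {6*m+5, 6*m+7} = 2" by (simp add: wt_def)
      ultimately show False using h(3) by simp
    qed
    have s1: "0 \<notin> B'"
    proof
      assume y: "0 \<in> B'"
      have "sum (wt m) B' = 0"
      proof (rule sum.neutral, rule ballI)
        fix e assume "e \<in> B'"
        then have "e \<in> sel m True True" using eq y s2 by simp
        then show "wt m e = 0" by (auto simp: wt_def sel_def split: if_splits)
      qed
      then show False using h(3) by simp
    qed
    show ?thesis using eq s1 s2 by simp
  qed
  have dist: "(\<Sum>e\<in>?E. \<bar>xst m e - chi ?B e\<bar>) = 3 / 4 * real (8*m+8)"
  proof -
    have sp: "?E = {0..<6*m+4} \<union> {6*m+4..<8*m+8}" by auto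
    have "(\<Sum>e\<in>?E. \<bar>xst m e - chi ?B e\<bar>) =
      (\<Sum>e\<in>{0..<6*m+4}. \<bar>xst m e - chi ?B e\<bar>) + (\<Sum>e\<in>{6*m+4..<8*m+8}. \<bar>xst m e - chi ?B e\<bar>)"
      unfolding sp by (rule sum.union_disjoint) auto
    also have "(\<Sum>e\<in>{0..<6*m+4}. \<bar>xst m e - chi ?B e\<bar>) = (\<Sum>e\<in>{0..<6*m+4}. 1)"
      by (rule sum.cong) (auto simp: xst_val chi_def sel_def indicator_def)
    also have "(\<Sum>e\<in>{6*m+4..<8*m+8}. \<bar>xst m e - chi ?B e\<bar>) = (\<Sum>e\<in>{6*m+4..<8*m+8}. cc m)"
      by (rule sum.cong) (use cc_pos[of m] in \<open>auto simp: xst_val chi_def sel_def indicator_def\<close>)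
    finally have "(\<Sum>e\<in>?E. \<bar>xst m e - chi ?B e\<bar>) = real (6*m+4) + real (2*m+4) * cc m" by simp
    also have "real (2*m+4) * cc m = 2" using cc_pos(3)[of m] by (simp add: algebra_simps)
    finally show ?thesis by simp
  qed
  have m1: "matroid ?E ?I" by (rule pm_matroid) simp
  have m2: "matroid ?E ?I'" by (rule pm_matroid) simp
  have wv: "\<forall>e\<in>?E. wt m e = 0 \<or> wt m e = 1" by (simp add: wt_def)
  have c: "card ?E = 8*m+8" by simp
  have exB: "\<exists>B. basis ?I B \<and> basis ?I' B \<and> sum (wt m) B = 1 \<and>
          (\<forall>B'. basis ?I B' \<and> basis ?I' B' \<and> sum (wt m) B' = 1 \<longrightarrow> B' = B) \<and>
          (\<Sum>e\<in>?E. \<bar>xst m e - chi B e\<bar>) = 3 / 4 * real (8*m+8)"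
  proof (rule exI[of _ ?B], intro conjI allI impI)
    show "basis ?I ?B" by (rule sel_basis1)
    show "basis ?I' ?B" by (rule sel_basis2)
    show "sum (wt m) ?B = 1" by (rule wB)
    show "(\<Sum>e\<in>?E. \<bar>xst m e - chi ?B e\<bar>) = 3 / 4 * real (8*m+8)" by (rule dist)
    fix B' assume "basis ?I B' \<and> basis ?I' B' \<and> sum (wt m) B' = 1"
    then show "B' = ?B" using uniq by blast
  qed
  show ?thesis
    apply (rule exI[of _ ?E], rule exI[of _ ?I], rule exI[of _ ?I'], rule exI[of _ "wt m"], rule exI[of _ "xst m"])
    apply (intro conjI)
         apply (rule c)
        apply (rule m1)
       apply (rule m2)
      apply (rule wv)
     apply (rule vert)
    apply (rule exB)
    done
qed

theorem theorem20:
  shows "infinite {n::nat. \<exists>(E::nat set) \<I> \<I>' (w::nat \<Rightarrow> real) (xs::nat \<Rightarrow> real).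
     card E = n \<and> matroid E \<I> \<and> matroid E \<I>' \<and> (\<forall>e\<in>E. w e = 0 \<or> w e = 1) \<and>
     vertex_of xs {x. x \<in> base_polytope \<I> \<inter> base_polytope \<I>' \<and> (\<Sum>e\<in>E. w e * x e) = 1} \<and>
     (\<exists>B. basis \<I> B \<and> basis \<I>' B \<and> sum w B = 1 \<and>
          (\<forall>B'. basis \<I> B' \<and> basis \<I>' B' \<and> sum w B' = 1 \<longrightarrow> B' = B) \<and>
          (\<Sum>e\<in>E. \<bar>xs e - chi B e\<bar>) = 3 / 4 * real n)}"
  (is "infinite ?S")
proof -
  have "range (\<lambda>m::nat. 8*m+8) \<subseteq> ?S" using main_m by blast
  moreover have "inj (\<lambda>m::nat. 8*m+8)" by (auto simp: inj_on_def)
  then have "infinite (range (\<lambda>m::nat. 8*m+8))" using finite_imageD infinite_UNIV_nat by blast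
  ultimately show ?thesis using infinite_super by blast
qed


end
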